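(* Let $g$ be a left-invariant Riemannian metric on $SU(2)$. Then there are left-invariant vector fields $X_1,X_2,X_3$ on $SU(2)$ with $[X_1,X_2]=X_3$, $[X_2,X_3]=X_1$, $[X_3,X_1]=X_2$ (a Milnor frame) and positive numbers $f_1,f_2,f_3$ such that $g=f_1^2\,\omega_1\otimes\omega_1+f_2^2\,\omega_2\otimes\omega_2+f_3^2\,\omega_3\otimes\omega_3$, where $\omega_i$ is the one-form dual to $X_i$. Moreover, $g$ passes to an $SU(2)$-invariant Riemannian metric on $SU(2)/\mathbb{Z}_n$ if and only if one of the following holds: (i) $n\in\{1,2\}$; (ii) $n=4$, and after possibly altering the choice of diagonalising Milnor frame, $X_1$ is a scalar multiple of $u_1$ and $\mathrm{span}\{X_2,X_3\}=\mathrm{span}\{u_2,u_3\}$; (iii) $n\in\mathbb{N}\setminus\{1,2,4\}$, and the diagonalising Milnor frame can be chosen with $X_i=\frac{u_i}{2}$, and in this basis $f_2=f_3$.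
   Context: $SU(2)=\{\begin{pmatrix}a&-\bar b\\ b&\bar a\end{pmatrix}: |a|^2+|b|^2=1\}$ with Lie algebra spanned by $u_1=\begin{pmatrix}i&0\\0&-i\end{pmatrix}$, $u_2=\begin{pmatrix}0&i\\ i&0\end{pmatrix}$, $u_3=\begin{pmatrix}0&-1\\1&0\end{pmatrix}$, satisfying $[u_1,u_2]=2u_3$, $[u_2,u_3]=2u_1$, $[u_3,u_1]=2u_2$. $\mathbb{Z}_n=\{\mathrm{diag}(e^{2\pi ik/n},e^{-2\pi ik/n}):k=0,\dots,n-1\}$ acts on $SU(2)$ by right multiplication, and $SU(2)/\mathbb{Z}_n$ carries the left $SU(2)$-action; a left-invariant metric "passes to" the quotient if it induces a Riemannian metric on $SU(2)/\mathbb{Z}_n$, which is then $SU(2)$-invariant. *)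

theory Defs
  imports "HOL-Analysis.Analysis"
begin

type_synonym cmat = "complex^2^2"

definition su2 :: "cmat set" where
  "su2 = {A. (\<forall>i j. cnj (A$i$j) = - (A$j$i)) \<and> A$1$1 + A$2$2 = 0}"

definition lie :: "cmat \<Rightarrow> cmat \<Rightarrow> cmat" where
  "lie A B = A ** B - B ** A"

definition u1 :: cmat where
  "u1 = (\<chi> i j. if i = j then (if i = 1 then \<i> else - \<i>) else 0)"

definition u2 :: cmat where
  "u2 = (\<chi> i j. if i = j then 0 else \<i>)"

definition u3 :: cmat where
  "u3 = (\<chi> i j. if i = j then 0 else (if i = 1 then -1 else 1))"

text \<open>A left-invariant Riemannian metric on SU(2) is identified with its value at the
identity: an inner product (symmetric, real-bilinear, positive definite form) on su(2).\<close>

definition left_inv_metric :: "(cmat \<Rightarrow> cmat \<Rightarrow> real) \<Rightarrow> bool" where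
  "left_inv_metric g \<longleftrightarrow>
     (\<forall>X\<in>su2. \<forall>Y\<in>su2. g X Y = g Y X) \<and>
     (\<forall>X\<in>su2. \<forall>Y\<in>su2. \<forall>Z\<in>su2. \<forall>a b::real.
        g (a *\<^sub>R X + b *\<^sub>R Y) Z = a * g X Z + b * g Y Z) \<and>
     (\<forall>X\<in>su2. X \<noteq> 0 \<longrightarrow> g X X > 0)"

definition milnor_frame :: "cmat \<Rightarrow> cmat \<Rightarrow> cmat \<Rightarrow> bool" where
  "milnor_frame X1 X2 X3 \<longleftrightarrow>
     X1 \<in> su2 \<and> X2 \<in> su2 \<and> X3 \<in> su2 \<and>
     (\<forall>a b c::real. a *\<^sub>R X1 + b *\<^sub>R X2 + c *\<^sub>R X3 = 0 \<longrightarrow> a = 0 \<and> b = 0 \<and> c = 0) \<and>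
     lie X1 X2 = X3 \<and> lie X2 X3 = X1 \<and> lie X3 X1 = X2"

text \<open>g = f1^2 w1 (x) w1 + f2^2 w2 (x) w2 + f3^2 w3 (x) w3, where w_i is the dual one-form:
w_i(a1 X1 + a2 X2 + a3 X3) = a_i.\<close>

definition diag_milnor ::
  "(cmat \<Rightarrow> cmat \<Rightarrow> real) \<Rightarrow> cmat \<Rightarrow> cmat \<Rightarrow> cmat \<Rightarrow> real \<Rightarrow> real \<Rightarrow> real \<Rightarrow> bool" where
  "diag_milnor g X1 X2 X3 f1 f2 f3 \<longleftrightarrow>
     milnor_frame X1 X2 X3 \<and> f1 > 0 \<and> f2 > 0 \<and> f3 > 0 \<and>
     (\<forall>a1 a2 a3 b1 b2 b3::real.
        g (a1 *\<^sub>R X1 + a2 *\<^sub>R X2 + a3 *\<^sub>R X3) (b1 *\<^sub>R X1 + b2 *\<^sub>R X2 + b3 *\<^sub>R X3)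
        = f1^2 * a1 * b1 + f2^2 * a2 * b2 + f3^2 * a3 * b3)"

definition zn :: "nat \<Rightarrow> int \<Rightarrow> cmat" where
  "zn n k = (\<chi> i j. if i = j then
        (if i = 1 then exp (2 * pi * \<i> * of_int k / of_nat n)
                  else exp (- (2 * pi * \<i> * of_int k / of_nat n)))
      else 0)"

text \<open>A left-invariant metric passes to SU(2)/Z_n (Z_n acting by right multiplication)
iff right translations by elements h of Z_n are isometries, i.e. iff the inner product
at the identity is Ad(h)-invariant, Ad(h) X = h X h^{-1}.\<close>

definition passes_to_quotient :: "nat \<Rightarrow> (cmat \<Rightarrow> cmat \<Rightarrow> real) \<Rightarrow> bool" where
  "passes_to_quotient n g \<longleftrightarrow>
     (\<forall>k<n. \<forall>X\<in>su2. \<forall>Y\<in>su2.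
        g (zn n (int k) ** X ** zn n (- int k)) (zn n (int k) ** Y ** zn n (- int k)) = g X Y)"

end

theory Submission
  imports Defs
begin


definition E1 :: cmat where "E1 = (1/2) *\<^sub>R u1"
definition E2 :: cmat where "E2 = (1/2) *\<^sub>R u2"
definition E3 :: cmat where "E3 = (1/2) *\<^sub>R u3"

definition phi :: "real^3 \<Rightarrow> cmat" where
  "phi x = x$1 *\<^sub>R E1 + x$2 *\<^sub>R E2 + x$3 *\<^sub>R E3"

lemma phi_entries:
  "phi x $1$1 = \<i> * of_real (x$1/2)"
  "phi x $2$2 = - \<i> * of_real (x$1/2)"
  "phi x $1$2 = \<i> * of_real (x$2/2) - of_real (x$3/2)"
  "phi x $2$1 = \<i> * of_real (x$2/2) + of_real (x$3/2)"
  by (simp_all add: phi_def E1_def E2_def E3_def u1_def u2_def u3_def complex_eq_iff)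

lemma phi_eq_iff: "A = B \<longleftrightarrow> (A$1$1 = B$1$1 \<and> A$1$2 = B$1$2 \<and> A$2$1 = B$2$1 \<and> A$2$2 = B$2$2)"
  for A B :: cmat
  by (auto simp: vec_eq_iff forall_2)

lemma phi_in: "phi x \<in> su2"
  unfolding su2_def by (auto simp: forall_2 phi_entries complex_eq_iff)

lemma su2_phi: assumes "X \<in> su2" shows "X = phi (vector [2 * Im (X$1$1), 2 * Im (X$1$2), - 2 * Re (X$1$2)])"
proof -
  have a: "\<And>i j. cnj (X$i$j) = - X$j$i" and b: "X$1$1 + X$2$2 = 0" using assms by (auto simp: su2_def)
  have c1: "Re (X$1$1) = 0" using a[of 1 1] by (simp add: complex_eq_iff)
  have c2: "X$2$1 = - cnj (X$1$2)" using a[of 1 2] by simp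
  have c3: "X$2$2 = - X$1$1" using b by (simp add: add_eq_0_iff)
  show ?thesis unfolding phi_eq_iff phi_entries using c1 c2 c3 by (simp add: complex_eq_iff)
qed

lemma phi_lin: "phi (a *\<^sub>R x + b *\<^sub>R y) = a *\<^sub>R phi x + b *\<^sub>R phi y"
  by (simp add: phi_def algebra_simps)

lemma phi_zero: "phi x = 0 \<longleftrightarrow> x = 0"
proof
  assume "phi x = 0"
  then have "phi x $1$1 = 0" "phi x $1$2 = 0" by simp_all
  then show "x = 0" by (auto simp: phi_entries complex_eq_iff vec_eq_iff forall_3)
qed (simp add: phi_def)

lemma phi_lie: "lie (phi a) (phi b) = phi (cross3 a b)"
  unfolding phi_eq_iff lie_def
  by (simp add: matrix_matrix_mult_def sum_2 phi_entries cross_components complex_eq_iff field_simps)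




definition rot :: "real \<Rightarrow> real^3 \<Rightarrow> real^3" where
  "rot t x = vector [x$1, cos t * x$2 - sin t * x$3, sin t * x$2 + cos t * x$3]"

definition hm :: "real \<Rightarrow> cmat" where
  "hm t = (\<chi> i j. if i = j then (if i = 1 then cis t else cis (- t)) else 0)"

lemma zn_hm: "zn n k = hm (2 * pi * of_int k / of_nat n)"
  unfolding zn_def hm_def cis_conv_exp
  by (intro arg_cong[where f=vec_lambda] ext) (simp add: field_simps)

lemma zn_neg: "zn n (- k) = hm (- (2 * pi * of_int k / of_nat n))"
  unfolding zn_hm by simp

lemma hm_Ad: "hm t ** phi x ** hm (-t) = phi (rot (2*t) x)"
proof -
  have s: "sin (2*t) = 2 * sin t * cos t" and c: "cos(2*t) = cos t * cos t - sin t * sin t"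
    by (simp_all add: sin_double cos_double power2_eq_square)
  have p: "sin t * sin t + cos t * cos t = 1" using sin_cos_squared_add[of t] by (simp add: power2_eq_square)
  show ?thesis
  unfolding phi_eq_iff
  apply (simp add: matrix_matrix_mult_def sum_2 hm_def phi_entries rot_def complex_eq_iff s c)
  apply (intro conjI)
  using p by algebra+
qed




lemma su2_comb: "X \<in> su2 \<Longrightarrow> Y \<in> su2 \<Longrightarrow> a *\<^sub>R X + b *\<^sub>R Y \<in> su2"
  by (metis su2_phi phi_lin phi_in)

lemma su2_zero: "0 \<in> su2" using phi_in[of 0] by (simp add: phi_def)

lemma su2_scale: "X \<in> su2 \<Longrightarrow> a *\<^sub>R X \<in> su2"
  using su2_comb[of X X a 0] by simp

lemma su2_add: "X \<in> su2 \<Longrightarrow> Y \<in> su2 \<Longrightarrow> X + Y \<in> su2"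
  using su2_comb[of X Y 1 1] by simp

lemma E_in: "E1 \<in> su2" "E2 \<in> su2" "E3 \<in> su2"
proof -
  have "phi (axis 1 1) = E1" "phi (axis 2 1) = E2" "phi (axis 3 1) = E3"
    by (simp_all add: phi_def axis_def)
  then show "E1 \<in> su2" "E2 \<in> su2" "E3 \<in> su2" using phi_in by metis+
qed

context
  fixes g :: "cmat \<Rightarrow> cmat \<Rightarrow> real"
  assumes lm: "left_inv_metric g"
begin

lemma gsym: "X \<in> su2 \<Longrightarrow> Y \<in> su2 \<Longrightarrow> g X Y = g Y X"
  using lm by (auto simp: left_inv_metric_def)

lemma lin1: "X \<in> su2 \<Longrightarrow> Y \<in> su2 \<Longrightarrow> Z \<in> su2 \<Longrightarrow> g (a *\<^sub>R X + b *\<^sub>R Y) Z = a * g X Z + b * g Y Z"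
  using lm by (auto simp: left_inv_metric_def)

lemma lin2: "X \<in> su2 \<Longrightarrow> Y \<in> su2 \<Longrightarrow> Z \<in> su2 \<Longrightarrow> g Z (a *\<^sub>R X + b *\<^sub>R Y) = a * g Z X + b * g Z Y"
proof -
  assume a: "X \<in> su2" "Y \<in> su2" "Z \<in> su2"
  have "g Z (a *\<^sub>R X + b *\<^sub>R Y) = g (a *\<^sub>R X + b *\<^sub>R Y) Z" using a by (simp add: gsym su2_comb)
  also have "\<dots> = a * g X Z + b * g Y Z" using a by (simp add: lin1)
  also have "\<dots> = a * g Z X + b * g Z Y" using a gsym[of X Z] gsym[of Y Z] by simp
  finally show ?thesis .
qed

lemma gpos: "X \<in> su2 \<Longrightarrow> X \<noteq> 0 \<Longrightarrow> g X X > 0"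
  using lm by (auto simp: left_inv_metric_def)

lemma lin3_1:
  assumes "X1 \<in> su2" "X2 \<in> su2" "X3 \<in> su2" "Z \<in> su2"
  shows "g (a1 *\<^sub>R X1 + a2 *\<^sub>R X2 + a3 *\<^sub>R X3) Z = a1 * g X1 Z + a2 * g X2 Z + a3 * g X3 Z"
proof -
  have "g (a1 *\<^sub>R X1 + a2 *\<^sub>R X2 + a3 *\<^sub>R X3) Z = g (1 *\<^sub>R (a1 *\<^sub>R X1 + a2 *\<^sub>R X2) + a3 *\<^sub>R X3) Z"
    by simp
  also have "\<dots> = g (a1 *\<^sub>R X1 + a2 *\<^sub>R X2) Z + a3 * g X3 Z"
    using assms by (subst lin1) (auto intro: su2_comb)
  also have "\<dots> = a1 * g X1 Z + a2 * g X2 Z + a3 * g X3 Z"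
    using assms by (simp add: lin1)
  finally show ?thesis .
qed

lemma expand3:
  assumes "X1 \<in> su2" "X2 \<in> su2" "X3 \<in> su2" "Y1 \<in> su2" "Y2 \<in> su2" "Y3 \<in> su2"
  shows "g (a1 *\<^sub>R X1 + a2 *\<^sub>R X2 + a3 *\<^sub>R X3) (b1 *\<^sub>R Y1 + b2 *\<^sub>R Y2 + b3 *\<^sub>R Y3) =
    a1 * b1 * g X1 Y1 + a1 * b2 * g X1 Y2 + a1 * b3 * g X1 Y3 +
    a2 * b1 * g X2 Y1 + a2 * b2 * g X2 Y2 + a2 * b3 * g X2 Y3 +
    a3 * b1 * g X3 Y1 + a3 * b2 * g X3 Y2 + a3 * b3 * g X3 Y3"
proof -
  have Y: "b1 *\<^sub>R Y1 + b2 *\<^sub>R Y2 + b3 *\<^sub>R Y3 \<in> su2" using assms by (intro su2_add su2_scale)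
  have "\<And>X. X \<in> su2 \<Longrightarrow> g X (b1 *\<^sub>R Y1 + b2 *\<^sub>R Y2 + b3 *\<^sub>R Y3) = b1 * g X Y1 + b2 * g X Y2 + b3 * g X Y3"
  proof -
    fix X assume X: "X \<in> su2"
    have "g X (b1 *\<^sub>R Y1 + b2 *\<^sub>R Y2 + b3 *\<^sub>R Y3) = g (b1 *\<^sub>R Y1 + b2 *\<^sub>R Y2 + b3 *\<^sub>R Y3) X"
      using X Y by (simp add: gsym)
    also have "\<dots> = b1 * g Y1 X + b2 * g Y2 X + b3 * g Y3 X" using X assms by (simp add: lin3_1)
    also have "\<dots> = b1 * g X Y1 + b2 * g X Y2 + b3 * g X Y3"
      using X assms gsym[of X Y1] gsym[of X Y2] gsym[of X Y3] by simp
    finally show "g X (b1 *\<^sub>R Y1 + b2 *\<^sub>R Y2 + b3 *\<^sub>R Y3) = b1 * g X Y1 + b2 * g X Y2 + b3 * g X Y3" .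
  qed
  note h = this
  have "g (a1 *\<^sub>R X1 + a2 *\<^sub>R X2 + a3 *\<^sub>R X3) (b1 *\<^sub>R Y1 + b2 *\<^sub>R Y2 + b3 *\<^sub>R Y3) =
    a1 * g X1 (b1 *\<^sub>R Y1 + b2 *\<^sub>R Y2 + b3 *\<^sub>R Y3) + a2 * g X2 (b1 *\<^sub>R Y1 + b2 *\<^sub>R Y2 + b3 *\<^sub>R Y3)
    + a3 * g X3 (b1 *\<^sub>R Y1 + b2 *\<^sub>R Y2 + b3 *\<^sub>R Y3)"
    using assms Y by (simp only: lin3_1)
  then show ?thesis unfolding h[OF assms(1)] h[OF assms(2)] h[OF assms(3)] by (simp add: algebra_simps)
qed

definition "m11 = g E1 E1"
definition "m12 = g E1 E2"
definition "m13 = g E1 E3"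
definition "m22 = g E2 E2"
definition "m23 = g E2 E3"
definition "m33 = g E3 E3"

lemma Gexp: "g (phi x) (phi y) =
   x$1*y$1*m11 + x$1*y$2*m12 + x$1*y$3*m13 + x$2*y$1*m12 + x$2*y$2*m22 + x$2*y$3*m23
   + x$3*y$1*m13 + x$3*y$2*m23 + x$3*y$3*m33"
  unfolding phi_def using E_in
  by (simp add: expand3 m11_def m12_def m13_def m22_def m23_def m33_def gsym[of E2 E1] gsym[of E3 E1] gsym[of E3 E2])

end



context
  fixes g :: "cmat \<Rightarrow> cmat \<Rightarrow> real"
  assumes lm: "left_inv_metric g"
begin

definition G where "G x y = g (phi x) (phi y)"

lemmas Gx = G_def Gexp[OF lm]

lemma Gsym: "G x y = G y x" by (simp add: Gx algebra_simps)
lemma Glin: "G (a *\<^sub>R x + b *\<^sub>R y) z = a * G x z + b * G y z" by (simp add: Gx algebra_simps)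
lemma Glin2: "G z (a *\<^sub>R x + b *\<^sub>R y) = a * G z x + b * G z y" by (simp add: Gx algebra_simps)
lemma Gscale: "G (c *\<^sub>R x) (c *\<^sub>R x) = c * c * G x x" by (simp add: Gx algebra_simps)
lemma Gzero: "G 0 y = 0" by (simp add: Gx)
lemma Gpos: "x \<noteq> 0 \<Longrightarrow> G x x > 0" unfolding G_def using gpos[OF lm, of "phi x"] phi_in phi_zero by auto
lemma Gcont: "continuous_on S (\<lambda>x. G x x)" unfolding Gx by (intro continuous_intros)

lemma orth_max:
  assumes V: "subspace V" and eV: "e \<in> V" and ne: "norm e = 1"
    and mx: "\<forall>z\<in>V. norm z = 1 \<longrightarrow> G z z \<le> G e e" and yV: "y \<in> V" and ey: "e \<bullet> y = 0"
  shows "G e y = 0"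
proof -
  define l where "l = G e e"
  have hom: "G z z \<le> l * (z \<bullet> z)" if zV: "z \<in> V" for z
  proof (cases "z = 0")
    case True then show ?thesis by (simp add: Gzero)
  next
    case False
    define w where "w = (1 / norm z) *\<^sub>R z"
    have "w \<in> V" unfolding w_def using V zV by (simp add: subspace_scale)
    moreover have "norm w = 1" using False by (simp add: w_def)
    ultimately have "G w w \<le> l" using mx l_def by blast
    then have "G z z / (norm z)^2 \<le> l" using Gscale[of "1 / norm z" z] by (simp add: w_def power2_eq_square)
    then have "G z z \<le> l * (norm z)^2" using False by (simp add: divide_le_eq)
    then show ?thesis by (simp add: power2_norm_eq_inner)
  qed
  define c where "c = G e y"
  define d where "d = G y y - l * (y \<bullet> y)"
  have key: "2 * t * c + t * t * d \<le> 0" for t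
  proof -
    have "e + t *\<^sub>R y \<in> V" using V eV yV by (simp add: subspace_add subspace_scale)
    then have h: "G (e + t *\<^sub>R y) (e + t *\<^sub>R y) \<le> l * ((e + t *\<^sub>R y) \<bullet> (e + t *\<^sub>R y))" by (rule hom)
    have q: "G (e + t *\<^sub>R y) (e + t *\<^sub>R y) = l + 2 * t * c + t * t * G y y"
      unfolding l_def c_def by (simp add: Gx algebra_simps)
    have ee: "e \<bullet> e = 1" using ne by (simp add: norm_eq_sqrt_inner)
    have i: "(e + t *\<^sub>R y) \<bullet> (e + t *\<^sub>R y) = 1 + t * t * (y \<bullet> y)"
      using ee ey by (simp add: inner_add_left inner_add_right inner_commute algebra_simps)
    have h2: "G (e + t *\<^sub>R y) (e + t *\<^sub>R y) \<le> l * (1 + t * t * (y \<bullet> y))" using h by (simp only: i)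
    show ?thesis using h2 unfolding q d_def by (simp add: algebra_simps)
  qed
  define D where "D = \<bar>d\<bar> + 1"
  have Dp: "D > 0" unfolding D_def by simp
  have "2 * (c / D) * c + (c / D) * (c / D) * d \<le> 0" by (rule key)
  moreover have "2 * (c / D) * c + (c / D) * (c / D) * d = c * c * (2 * D + d) / (D * D)"
    using Dp by (simp add: field_simps)
  ultimately have "c * c * (2 * D + d) / (D * D) \<le> 0" by simp
  then have "c * c * (2 * D + d) \<le> 0" using Dp mult_pos_pos[OF Dp Dp] by (auto simp add: divide_le_0_iff)
  moreover have "2 * D + d > 0" unfolding D_def by (cases "d \<ge> 0") auto
  ultimately have "c * c \<le> 0" by (simp add: mult_le_0_iff)
  then show ?thesis unfolding c_def by (metis mult_le_0_iff not_square_less_zero order_antisym_conv zero_le_square mult_eq_0_iff)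
qed

end



lemma bac: "cross3 b (cross3 a b) = (b \<bullet> b) *\<^sub>R a - (a \<bullet> b) *\<^sub>R b"
  by (simp add: cross3_simps forall_3)
lemma bac2: "cross3 (cross3 a b) a = (a \<bullet> a) *\<^sub>R b - (a \<bullet> b) *\<^sub>R a"
  by (simp add: cross3_simps forall_3)

lemma phi_lin3: "phi (a *\<^sub>R x + b *\<^sub>R y + c *\<^sub>R z) = a *\<^sub>R phi x + b *\<^sub>R phi y + c *\<^sub>R phi z"
  by (simp add: phi_def algebra_simps)

context
  fixes g :: "cmat \<Rightarrow> cmat \<Rightarrow> real"
  assumes lm: "left_inv_metric g"
begin

lemma exists_e1: "\<exists>e1. norm e1 = 1 \<and> (\<forall>y. e1 \<bullet> y = 0 \<longrightarrow> G g e1 y = 0)"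
proof -
  have "\<exists>x\<in>sphere (0::real^3) 1. \<forall>y\<in>sphere 0 1. G g y y \<le> G g x x"
    by (rule continuous_attains_sup) (auto intro: Gcont[OF lm] exI[of _ "axis 1 1"] simp: norm_axis_1)
  then obtain e where e: "norm e = 1" "\<forall>y. norm y = 1 \<longrightarrow> G g y y \<le> G g e e" by auto
  show ?thesis
    using orth_max[OF lm subspace_UNIV, of e] e by auto
qed

lemma exists_e2:
  assumes n1: "norm e1 = 1" and o1: "\<forall>y. e1 \<bullet> y = 0 \<longrightarrow> G g e1 y = 0"
  shows "\<exists>e2. norm e2 = 1 \<and> e1 \<bullet> e2 = 0 \<and> G g e2 (cross3 e1 e2) = 0"
proof -
  define V where "V = {x. e1 \<bullet> x = 0}"
  have sV: "subspace V" unfolding V_def by (rule subspace_hyperplane)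
  have cV: "closed V" unfolding V_def by (rule closed_hyperplane)
  have "e1 \<noteq> 0" using n1 by auto
  then obtain k where k: "cross3 e1 (axis k 1) \<noteq> 0" using cross_basis_nonzero by blast
  define w where "w = (1 / norm (cross3 e1 (axis k 1))) *\<^sub>R cross3 e1 (axis k 1)"
  have w: "w \<in> sphere 0 1 \<inter> V" using k by (simp add: w_def V_def dot_cross_self inner_scaleR_right)
  have "\<exists>x\<in>sphere (0::real^3) 1 \<inter> V. \<forall>y\<in>sphere 0 1 \<inter> V. G g y y \<le> G g x x"
    using w by (intro continuous_attains_sup compact_Int_closed compact_sphere cV Gcont[OF lm]) auto
  then obtain e where e: "norm e = 1" "e \<in> V" "\<forall>y\<in>V. norm y = 1 \<longrightarrow> G g y y \<le> G g e e" by auto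
  have "cross3 e1 e \<in> V" unfolding V_def by (simp add: dot_cross_self)
  moreover have "e \<bullet> cross3 e1 e = 0" by (simp add: dot_cross_self)
  ultimately have "G g e (cross3 e1 e) = 0" using orth_max[OF lm sV e(2) e(1) e(3)] by blast
  then show ?thesis using e V_def by auto
qed

lemma frame:
  assumes n1: "norm e1 = 1" and n2: "norm e2 = 1" and o12: "e1 \<bullet> e2 = 0"
    and e3: "e3 = cross3 e1 e2"
    and g12: "G g e1 e2 = 0" and g13: "G g e1 e3 = 0" and g23: "G g e2 e3 = 0"
  shows "diag_milnor g (phi e1) (phi e2) (phi e3) (sqrt (G g e1 e1)) (sqrt (G g e2 e2)) (sqrt (G g e3 e3))"
proof -
  have i11: "e1 \<bullet> e1 = 1" using n1 by (simp add: norm_eq_sqrt_inner)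
  have i22: "e2 \<bullet> e2 = 1" using n2 by (simp add: norm_eq_sqrt_inner)
  have i21: "e2 \<bullet> e1 = 0" using o12 by (simp add: inner_commute)
  have i13: "e1 \<bullet> e3 = 0" "e3 \<bullet> e1 = 0" "e2 \<bullet> e3 = 0" "e3 \<bullet> e2 = 0"
    unfolding e3 by (simp_all add: dot_cross_self)
  have "(norm e3)^2 + (e1 \<bullet> e2)^2 = (norm e1 * norm e2)^2" unfolding e3 by (rule norm_cross_dot)
  then have "(norm e3)^2 = 1" using n1 n2 o12 by simp
  then have "norm e3 = 1" using norm_ge_zero[of e3] by (auto simp add: power2_eq_1_iff)
  then have i33: "e3 \<bullet> e3 = 1" by (simp add: norm_eq_sqrt_inner)
  have c1: "cross3 e2 e3 = e1" unfolding e3 bac using i22 o12 by simp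
  have c2: "cross3 e3 e1 = e2" unfolding e3 bac2 using i11 o12 by simp
  have nz: "e1 \<noteq> 0" "e2 \<noteq> 0" "e3 \<noteq> 0" using i11 i22 i33 by auto
  have pos: "G g e1 e1 > 0" "G g e2 e2 > 0" "G g e3 e3 > 0" using nz Gpos[OF lm] by auto
  have indep: "a = 0 \<and> b = 0 \<and> c = 0" if h: "a *\<^sub>R phi e1 + b *\<^sub>R phi e2 + c *\<^sub>R phi e3 = 0" for a b c
  proof -
    have z: "a *\<^sub>R e1 + b *\<^sub>R e2 + c *\<^sub>R e3 = 0" using h unfolding phi_lin3[symmetric] phi_zero .
    have "e1 \<bullet> (a *\<^sub>R e1 + b *\<^sub>R e2 + c *\<^sub>R e3) = a"
         "e2 \<bullet> (a *\<^sub>R e1 + b *\<^sub>R e2 + c *\<^sub>R e3) = b"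
         "e3 \<bullet> (a *\<^sub>R e1 + b *\<^sub>R e2 + c *\<^sub>R e3) = c"
      using i11 i22 i33 i21 o12 i13 by (simp_all add: inner_add_right)
    then show ?thesis using z nz by auto
  qed
  have mf: "milnor_frame (phi e1) (phi e2) (phi e3)"
    unfolding milnor_frame_def using indep phi_in
    by (simp add: phi_lie e3[symmetric] c1 c2)
  have gsy: "G g e2 e1 = 0" "G g e3 e1 = 0" "G g e3 e2 = 0"
    using g12 g13 g23 Gsym[OF lm] by metis+
  show ?thesis
    unfolding diag_milnor_def
    using mf pos
    apply (simp add: expand3[OF lm phi_in phi_in phi_in phi_in phi_in phi_in])
    apply (simp add: G_def[OF lm, symmetric] g12 g13 g23 gsy less_imp_le)
    done
qed

end



definition ang :: "nat \<Rightarrow> nat \<Rightarrow> real" where "ang n k = 2 * (2 * pi * real k / real n)"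

lemma rot_id: "sin t = 0 \<Longrightarrow> cos t = 1 \<Longrightarrow> rot t x = x"
  by (simp add: rot_def vec_eq_iff forall_3)

lemma u_phi: "u1 = phi (vector [2,0,0])" "u2 = phi (vector [0,2,0])" "u3 = phi (vector [0,0,2])"
  by (simp_all add: phi_def E1_def E2_def E3_def)

lemma E_phi: "(1/2) *\<^sub>R u1 = phi (vector [1,0,0])" "(1/2) *\<^sub>R u2 = phi (vector [0,1,0])" "(1/2) *\<^sub>R u3 = phi (vector [0,0,1])"
  by (simp_all add: phi_def E1_def E2_def E3_def)

lemma in_span2: "x = a *\<^sub>R A + b *\<^sub>R B \<Longrightarrow> x \<in> span {A, B}"
  by (simp add: span_add span_base span_scale)

lemma span2_ex: "x \<in> span {A, B} \<Longrightarrow> \<exists>a b. x = a *\<^sub>R A + b *\<^sub>R B"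
  unfolding span_breakdown_eq span_singleton by (auto simp: algebra_simps) (metis add.commute diff_add_cancel)

context
  fixes g :: "cmat \<Rightarrow> cmat \<Rightarrow> real"
  assumes lm: "left_inv_metric g"
begin

lemma passes_iff: "passes_to_quotient n g \<longleftrightarrow> (\<forall>k<n. \<forall>x y. G g (rot (ang n k) x) (rot (ang n k) y) = G g x y)"
proof -
  have ad: "zn n (int k) ** phi x ** zn n (- int k) = phi (rot (ang n k) x)" for k x
    unfolding zn_neg unfolding zn_hm ang_def of_int_of_nat_eq by (rule hm_Ad)
  show ?thesis
  proof
    assume p: "passes_to_quotient n g"
    show "\<forall>k<n. \<forall>x y. G g (rot (ang n k) x) (rot (ang n k) y) = G g x y"
      using p unfolding passes_to_quotient_def G_def[OF lm] by (auto simp: phi_in ad[symmetric])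
  next
    assume h: "\<forall>k<n. \<forall>x y. G g (rot (ang n k) x) (rot (ang n k) y) = G g x y"
    show "passes_to_quotient n g"
      unfolding passes_to_quotient_def
    proof (intro allI impI ballI)
      fix k X Y assume k: "k < n" and X: "X \<in> su2" and Y: "Y \<in> su2"
      obtain x y where "X = phi x" "Y = phi y" using su2_phi[OF X] su2_phi[OF Y] by blast
      then show "g (zn n (int k) ** X ** zn n (- int k)) (zn n (int k) ** Y ** zn n (- int k)) = g X Y"
        using h k by (simp add: ad G_def[OF lm])
    qed
  qed
qed

lemmas GG = G_def[OF lm] Gexp[OF lm]

lemma inv_full:
  assumes "m12 g = 0" "m13 g = 0" "m23 g = 0" "m22 g = m33 g"
  shows "G g (rot t x) (rot t y) = G g x y"
proof -
  have p: "sin t * sin t + cos t * cos t = 1" using sin_cos_squared_add[of t] by (simp add: power2_eq_square)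
  show ?thesis unfolding GG using assms apply (simp add: rot_def)
    using p by algebra
qed

lemma inv_half:
  assumes "m12 g = 0" "m13 g = 0" "sin t = 0"
  shows "G g (rot t x) (rot t y) = G g x y"
proof -
  have p: "cos t * cos t = 1" using sin_cos_squared_add[of t] assms(3) by (simp add: power2_eq_square)
  show ?thesis unfolding GG using assms apply (simp add: rot_def)
    using p by algebra
qed

lemma nec1:
  assumes inv: "\<forall>x y. G g (rot t x) (rot t y) = G g x y" and c: "cos t \<noteq> 1"
  shows "m12 g = 0 \<and> m13 g = 0"
proof -
  have p: "sin t * sin t + cos t * cos t = 1" using sin_cos_squared_add[of t] by (simp add: power2_eq_square)
  have a: "cos t * m12 g + sin t * m13 g = m12 g"
    using inv[rule_format, of "vector [1,0,0]" "vector [0,1,0]"] unfolding GG by (simp add: rot_def)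
  have b: "- sin t * m12 g + cos t * m13 g = m13 g"
    using inv[rule_format, of "vector [1,0,0]" "vector [0,0,1]"] unfolding GG by (simp add: rot_def)
  have nz: "(cos t - 1) * (cos t - 1) + sin t * sin t \<noteq> 0"
  proof
    assume "(cos t - 1) * (cos t - 1) + sin t * sin t = 0"
    then have "(cos t - 1) * (cos t - 1) = 0" using zero_le_square[of "cos t - 1"] zero_le_square[of "sin t"] by linarith
    then show False using c by simp
  qed
  have a': "(cos t - 1) * m12 g + sin t * m13 g = 0" using a by (simp add: algebra_simps)
  have b': "- sin t * m12 g + (cos t - 1) * m13 g = 0" using b by (simp add: algebra_simps)
  have e1: "((cos t - 1) * (cos t - 1) + sin t * sin t) * m12 g =
     (cos t - 1) * ((cos t - 1) * m12 g + sin t * m13 g) - sin t * (- sin t * m12 g + (cos t - 1) * m13 g)"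
    by algebra
  have e2: "((cos t - 1) * (cos t - 1) + sin t * sin t) * m13 g =
     sin t * ((cos t - 1) * m12 g + sin t * m13 g) + (cos t - 1) * (- sin t * m12 g + (cos t - 1) * m13 g)"
    by algebra
  note e1 e2 
  then have e1: "((cos t - 1) * (cos t - 1) + sin t * sin t) * m12 g = 0"
    and e2: "((cos t - 1) * (cos t - 1) + sin t * sin t) * m13 g = 0" unfolding a' b' by simp_all
  show ?thesis using e1 e2 nz c by auto
qed

lemma nec2:
  assumes inv: "\<forall>x y. G g (rot t x) (rot t y) = G g x y" and s: "sin t \<noteq> 0"
  shows "m23 g = 0 \<and> m22 g = m33 g"
proof -
  have p: "sin t * sin t + cos t * cos t = 1" using sin_cos_squared_add[of t] by (simp add: power2_eq_square)
  have a: "cos t * cos t * m22 g + 2 * cos t * sin t * m23 g + sin t * sin t * m33 g = m22 g"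
    using inv[rule_format, of "vector [0,1,0]" "vector [0,1,0]"] unfolding GG by (simp add: rot_def algebra_simps)
  have b: "- cos t * sin t * m22 g + (cos t * cos t - sin t * sin t) * m23 g + cos t * sin t * m33 g = m23 g"
    using inv[rule_format, of "vector [0,1,0]" "vector [0,0,1]"] unfolding GG by (simp add: rot_def algebra_simps)
  have cc: "cos t * cos t = 1 - sin t * sin t" using p by simp
  have a2: "sin t * (sin t * (m33 g - m22 g) + 2 * cos t * m23 g) = 0" using a unfolding cc by (simp add: algebra_simps)
  have b2: "sin t * (cos t * (m33 g - m22 g) - 2 * sin t * m23 g) = 0" using b unfolding cc by (simp add: algebra_simps)
  have a3: "sin t * (m33 g - m22 g) + 2 * cos t * m23 g = 0" using a2 s by simp
  have b3: "cos t * (m33 g - m22 g) - 2 * sin t * m23 g = 0" using b2 s by simp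
  have "m33 g - m22 g = (sin t * sin t + cos t * cos t) * (m33 g - m22 g)" using p by simp
  also have "\<dots> = sin t * (sin t * (m33 g - m22 g) + 2 * cos t * m23 g) + cos t * (cos t * (m33 g - m22 g) - 2 * sin t * m23 g)"
    by algebra
  finally have "m33 g - m22 g = sin t * (sin t * (m33 g - m22 g) + 2 * cos t * m23 g) + cos t * (cos t * (m33 g - m22 g) - 2 * sin t * m23 g)" .
  then have d0: "m33 g - m22 g = 0" using a3 b3 by simp
  have "2 * m23 g = (sin t * sin t + cos t * cos t) * (2 * m23 g)" using p by simp
  also have "\<dots> = cos t * (sin t * (m33 g - m22 g) + 2 * cos t * m23 g) - sin t * (cos t * (m33 g - m22 g) - 2 * sin t * m23 g)"
    by algebra
  finally have "2 * m23 g = cos t * (sin t * (m33 g - m22 g) + 2 * cos t * m23 g) - sin t * (cos t * (m33 g - m22 g) - 2 * sin t * m23 g)" .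
  then have "m23 g = 0" using a3 b3 by simp
  then show ?thesis using d0 by simp
qed

end



lemma phi_comb: "z = a *\<^sub>R x + b *\<^sub>R y \<Longrightarrow> phi z = a *\<^sub>R phi x + b *\<^sub>R phi y"
  by (simp add: phi_lin)

lemma ang_n4: "ang 4 k = real k * pi" by (simp add: ang_def)

lemma sin_ang: assumes "n \<ge> 3" "n \<noteq> 4" shows "sin (ang n 1) \<noteq> 0"
proof (cases "n = 3")
  case True
  have h: "ang n 1 = pi / 3 + pi" using True by (simp add: ang_def)
  have "sin (ang n 1) = - sin (pi / 3)" unfolding h by (rule sin_periodic_pi)
  moreover have "sin (pi / 3) > 0" by (rule sin_gt_zero) auto
  ultimately show ?thesis by simp
next
  case False
  then have n5: "real n > 4" using assms by simp
  have "ang n 1 = 4 * pi / real n" by (simp add: ang_def)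
  moreover have "0 < 4 * pi / real n" using n5 by simp
  moreover have "4 * pi / real n < pi" using n5 by (simp add: divide_less_eq)
  ultimately have "sin (ang n 1) > 0" by (simp add: sin_gt_zero)
  then show ?thesis by simp
qed

lemma cos_ne1: "sin (t::real) \<noteq> 0 \<Longrightarrow> cos t \<noteq> 1"
proof
  assume "sin t \<noteq> 0" "cos t = 1"
  then have "(sin t)^2 = 0" using sin_cos_squared_add[of t] by simp
  then show False using \<open>sin t \<noteq> 0\<close> by simp
qed

lemma v_inner: "vector [a,b,c] \<bullet> (y::real^3) = a * y$1 + b * y$2 + c * y$3"
  by (simp add: inner_vec_def sum_3)

lemma norm_v100: "norm (vector [1,0,0] :: real^3) = 1"
  by (simp add: norm_eq_sqrt_inner v_inner)

theorem proposition2p1: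
  fixes g :: "cmat \<Rightarrow> cmat \<Rightarrow> real" and n :: nat
  assumes "left_inv_metric g" and "n \<ge> 1"
  shows "(\<exists>X1 X2 X3 f1 f2 f3. diag_milnor g X1 X2 X3 f1 f2 f3) \<and>
    (passes_to_quotient n g \<longleftrightarrow>
       n \<in> {1, 2} \<or>
       (n = 4 \<and> (\<exists>X1 X2 X3 f1 f2 f3. diag_milnor g X1 X2 X3 f1 f2 f3 \<and>
                    (\<exists>c::real. X1 = c *\<^sub>R u1) \<and> span {X2, X3} = span {u2, u3})) \<or>
       (n \<notin> {1, 2, 4} \<and> (\<exists>f1 f2 f3.
          diag_milnor g ((1/2) *\<^sub>R u1) ((1/2) *\<^sub>R u2) ((1/2) *\<^sub>R u3) f1 f2 f3 \<and> f2 = f3)))"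
proof -
  note lm = assms(1)
  note GG = G_def[OF lm] Gexp[OF lm]
  have fr: "\<exists>X1 X2 X3 f1 f2 f3. diag_milnor g X1 X2 X3 f1 f2 f3
              \<and> X1 = phi e1 \<and> span {X2, X3} = span {phi e2, phi (cross3 e1 e2)}"
    if n1: "norm e1 = 1" and o1: "\<forall>y. e1 \<bullet> y = 0 \<longrightarrow> G g e1 y = 0" and n2: "norm e2 = 1"
      and o12: "e1 \<bullet> e2 = 0" and g23: "G g e2 (cross3 e1 e2) = 0" for e1 e2
  proof -
    have "G g e1 e2 = 0" using o1 o12 by blast
    moreover have "G g e1 (cross3 e1 e2) = 0" using o1 by (simp add: dot_cross_self)
    ultimately show ?thesis using frame[OF lm n1 n2 o12 refl _ _ g23] by blast
  qed
  have part1: "\<exists>X1 X2 X3 f1 f2 f3. diag_milnor g X1 X2 X3 f1 f2 f3"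
  proof -
    obtain e1 where n1: "norm e1 = 1" and o1: "\<forall>y. e1 \<bullet> y = 0 \<longrightarrow> G g e1 y = 0"
      using exists_e1[OF lm] by blast
    obtain e2 where "norm e2 = 1" "e1 \<bullet> e2 = 0" "G g e2 (cross3 e1 e2) = 0"
      using exists_e2[OF lm n1 o1] by blast
    then show ?thesis using fr[OF n1 o1] by blast
  qed
  have part2: "passes_to_quotient n g \<longleftrightarrow>
       n \<in> {1, 2} \<or>
       (n = 4 \<and> (\<exists>X1 X2 X3 f1 f2 f3. diag_milnor g X1 X2 X3 f1 f2 f3 \<and>
                    (\<exists>c::real. X1 = c *\<^sub>R u1) \<and> span {X2, X3} = span {u2, u3})) \<or>
       (n \<notin> {1, 2, 4} \<and> (\<exists>f1 f2 f3.
          diag_milnor g ((1/2) *\<^sub>R u1) ((1/2) *\<^sub>R u2) ((1/2) *\<^sub>R u3) f1 f2 f3 \<and> f2 = f3))"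
  proof (cases "n \<in> {1, 2}")
    case True
    have "\<forall>k<n. \<forall>x y. G g (rot (ang n k) x) (rot (ang n k) y) = G g x y"
    proof (intro allI impI)
      fix k x y assume k: "k < n"
      have "sin (ang n k) = 0 \<and> cos (ang n k) = 1"
      proof -
        have "n = 1 \<and> k = 0 \<or> n = 2 \<and> k = 0 \<or> n = 2 \<and> k = 1" using True k by auto
        then show ?thesis by (auto simp: ang_def)
      qed
      then show "G g (rot (ang n k) x) (rot (ang n k) y) = G g x y" by (simp add: rot_id)
    qed
    then show ?thesis using True passes_iff[OF lm] by simp
  next
    case False
    note nF = False
    show ?thesis
    proof (cases "n = 4")
      case True
      have rhs: "(\<exists>X1 X2 X3 f1 f2 f3. diag_milnor g X1 X2 X3 f1 f2 f3 \<and>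
                    (\<exists>c::real. X1 = c *\<^sub>R u1) \<and> span {X2, X3} = span {u2, u3}) \<longleftrightarrow> passes_to_quotient n g"
      proof
        assume "\<exists>X1 X2 X3 f1 f2 f3. diag_milnor g X1 X2 X3 f1 f2 f3 \<and>
                    (\<exists>c::real. X1 = c *\<^sub>R u1) \<and> span {X2, X3} = span {u2, u3}"
        then obtain X1 X2 X3 f1 f2 f3 c where d: "diag_milnor g X1 X2 X3 f1 f2 f3"
          and X1: "X1 = c *\<^sub>R u1" and sp: "span {X2, X3} = span {u2, u3}" by blast
        have mf: "milnor_frame X1 X2 X3" using d by (simp add: diag_milnor_def)
        have X23: "X2 \<in> su2" "X3 \<in> su2" using mf by (simp_all add: milnor_frame_def)
        have form: "\<forall>a1 a2 a3 b1 b2 b3. g (a1 *\<^sub>R X1 + a2 *\<^sub>R X2 + a3 *\<^sub>R X3) (b1 *\<^sub>R X1 + b2 *\<^sub>R X2 + b3 *\<^sub>R X3)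
          = f1^2 * a1 * b1 + f2^2 * a2 * b2 + f3^2 * a3 * b3" using d by (simp add: diag_milnor_def)
        have g12: "g X1 X2 = 0" using form[rule_format, of 1 0 0 0 1 0] by simp
        have g13: "g X1 X3 = 0" using form[rule_format, of 1 0 0 0 0 1] by simp
        have "c \<noteq> 0"
        proof
          assume "c = 0"
          then have "1 *\<^sub>R X1 + 0 *\<^sub>R X2 + 0 *\<^sub>R X3 = 0" using X1 by simp
          then have "(1::real) = 0" using mf unfolding milnor_frame_def by blast
          then show False by simp
        qed
        have X1p: "X1 = phi (vector [2 * c, 0, 0])" using X1 by (simp add: u_phi phi_def)
        have X1s: "X1 \<in> su2" using X1p phi_in by simp
        have orth: "g X1 u = 0" if uin: "u \<in> span {u2, u3}" for u
        proof -
          obtain a b where "u = a *\<^sub>R X2 + b *\<^sub>R X3" using span2_ex[of u X2 X3] uin sp by auto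
          then show ?thesis using lin2[OF lm X23 X1s] g12 g13 by simp
        qed
        have "g X1 u2 = 0" "g X1 u3 = 0" using orth by (simp_all add: span_base)
        then have "4 * c * m12 g = 0" "4 * c * m13 g = 0"
          unfolding X1p u_phi GG by simp_all
        then have m: "m12 g = 0" "m13 g = 0" using \<open>c \<noteq> 0\<close> by simp_all
        show "passes_to_quotient n g" unfolding passes_iff[OF lm] True ang_n4
          using inv_half[OF lm m] by (simp add: sin_npi)
      next
        assume "passes_to_quotient n g"
        then have "\<forall>x y. G g (rot (ang 4 1) x) (rot (ang 4 1) y) = G g x y"
          unfolding passes_iff[OF lm] True by simp
        moreover have "cos (ang 4 1) \<noteq> 1" by (simp add: ang_n4)
        ultimately have m: "m12 g = 0" "m13 g = 0" using nec1[OF lm] by blast+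
        define e1 :: "real^3" where "e1 = vector [1,0,0]"
        have n1: "norm e1 = 1" unfolding e1_def by (rule norm_v100)
        have o1: "\<forall>y. e1 \<bullet> y = 0 \<longrightarrow> G g e1 y = 0"
          unfolding e1_def v_inner GG using m by simp
        obtain e2 where n2: "norm e2 = 1" and o12: "e1 \<bullet> e2 = 0" and g23: "G g e2 (cross3 e1 e2) = 0"
          using exists_e2[OF lm n1 o1] by blast
        obtain X1 X2 X3 f1 f2 f3 where d: "diag_milnor g X1 X2 X3 f1 f2 f3" and X1: "X1 = phi e1"
          and sp: "span {X2, X3} = span {phi e2, phi (cross3 e1 e2)}"
          using fr[OF n1 o1 n2 o12 g23] by blast
        have X1c: "X1 = (1/2) *\<^sub>R u1" using X1 E_phi e1_def by simp
        define p where "p = e2$2"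
        define q where "q = e2$3"
        have e21: "e2$1 = 0" using o12 unfolding e1_def v_inner by simp
        have pq: "p * p + q * q = 1"
        proof -
          have "e2 \<bullet> e2 = 1" using n2 by (simp add: norm_eq_sqrt_inner)
          then show ?thesis using e21 by (simp add: inner_vec_def sum_3 p_def q_def)
        qed
        have pq2: "p * (p * 2) + q * (q * 2) = 2" using pq by algebra
        have e3c: "cross3 e1 e2 = vector [0, - q, p]"
          unfolding e1_def p_def q_def by (simp add: cross3_def e21)
        have a1: "phi e2 = (p/2) *\<^sub>R u2 + (q/2) *\<^sub>R u3" unfolding u_phi
          by (rule phi_comb) (simp add: vec_eq_iff forall_3 e21 p_def q_def)
        have a2: "phi (cross3 e1 e2) = (-q/2) *\<^sub>R u2 + (p/2) *\<^sub>R u3" unfolding u_phi e3c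
          by (rule phi_comb) (simp add: vec_eq_iff forall_3)
        have b1: "u2 = (2*p) *\<^sub>R phi e2 + (-2*q) *\<^sub>R phi (cross3 e1 e2)" unfolding u_phi(2) e3c
          by (rule phi_comb) (simp add: vec_eq_iff forall_3 e21 p_def[symmetric] q_def[symmetric]
              algebra_simps pq2)
        have b2: "u3 = (2*q) *\<^sub>R phi e2 + (2*p) *\<^sub>R phi (cross3 e1 e2)" unfolding u_phi(3) e3c
          by (rule phi_comb) (simp add: vec_eq_iff forall_3 e21 p_def[symmetric] q_def[symmetric]
              algebra_simps pq2)
        have "span {phi e2, phi (cross3 e1 e2)} = span {u2, u3}"
          unfolding span_eq using in_span2[OF a1] in_span2[OF a2] in_span2[OF b1] in_span2[OF b2] by blast
        then show "\<exists>X1 X2 X3 f1 f2 f3. diag_milnor g X1 X2 X3 f1 f2 f3 \<and>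
                    (\<exists>c::real. X1 = c *\<^sub>R u1) \<and> span {X2, X3} = span {u2, u3}"
          using d X1c sp by blast
      qed
      then show ?thesis using True by auto
    next
      case False
      have n3: "n \<ge> 3" using nF assms(2) by auto
      have rhs: "(\<exists>f1 f2 f3.
          diag_milnor g ((1/2) *\<^sub>R u1) ((1/2) *\<^sub>R u2) ((1/2) *\<^sub>R u3) f1 f2 f3 \<and> f2 = f3)
          \<longleftrightarrow> passes_to_quotient n g"
      proof
        assume "\<exists>f1 f2 f3.
          diag_milnor g ((1/2) *\<^sub>R u1) ((1/2) *\<^sub>R u2) ((1/2) *\<^sub>R u3) f1 f2 f3 \<and> f2 = f3"
        then obtain f1 f2 f3 where d: "diag_milnor g E1 E2 E3 f1 f2 f3" and f: "f2 = f3"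
          unfolding E1_def E2_def E3_def by blast
        have form: "\<forall>a1 a2 a3 b1 b2 b3. g (a1 *\<^sub>R E1 + a2 *\<^sub>R E2 + a3 *\<^sub>R E3) (b1 *\<^sub>R E1 + b2 *\<^sub>R E2 + b3 *\<^sub>R E3)
          = f1^2 * a1 * b1 + f2^2 * a2 * b2 + f3^2 * a3 * b3" using d by (simp add: diag_milnor_def)
        have "m12 g = 0" using form[rule_format, of 1 0 0 0 1 0] by (simp add: m12_def[OF lm])
        moreover have "m13 g = 0" using form[rule_format, of 1 0 0 0 0 1] by (simp add: m13_def[OF lm])
        moreover have "m23 g = 0" using form[rule_format, of 0 1 0 0 0 1] by (simp add: m23_def[OF lm])
        moreover have "m22 g = m33 g" using form[rule_format, of 0 1 0 0 1 0] form[rule_format, of 0 0 1 0 0 1] f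
          by (simp add: m22_def[OF lm] m33_def[OF lm])
        ultimately show "passes_to_quotient n g" unfolding passes_iff[OF lm] using inv_full[OF lm] by blast
      next
        assume "passes_to_quotient n g"
        then have inv: "\<forall>x y. G g (rot (ang n 1) x) (rot (ang n 1) y) = G g x y"
          unfolding passes_iff[OF lm] using n3 by simp
        have s: "sin (ang n 1) \<noteq> 0" using sin_ang n3 False by blast
        have m: "m12 g = 0" "m13 g = 0" using nec1[OF lm inv cos_ne1[OF s]] by simp_all
        have m2: "m23 g = 0" "m22 g = m33 g" using nec2[OF lm inv s] by simp_all
        define e1 :: "real^3" where "e1 = vector [1,0,0]"
        define e2 :: "real^3" where "e2 = vector [0,1,0]"
        have e3: "cross3 e1 e2 = vector [0,0,1]" by (simp add: e1_def e2_def cross3_def)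
        have n1: "norm e1 = 1" unfolding e1_def by (rule norm_v100)
        have n2: "norm e2 = 1" unfolding e2_def by (simp add: norm_eq_sqrt_inner v_inner)
        have o12: "e1 \<bullet> e2 = 0" unfolding e1_def e2_def v_inner by simp
        have g12: "G g e1 e2 = 0" "G g e1 (cross3 e1 e2) = 0" "G g e2 (cross3 e1 e2) = 0"
          unfolding e3 unfolding e1_def e2_def GG using m m2 by simp_all
        have gg: "G g e2 e2 = G g (cross3 e1 e2) (cross3 e1 e2)"
          unfolding e3 unfolding e2_def GG using m2 by simp
        have dd: "diag_milnor g (phi e1) (phi e2) (phi (cross3 e1 e2)) (sqrt (G g e1 e1)) (sqrt (G g e2 e2)) (sqrt (G g (cross3 e1 e2) (cross3 e1 e2)))"
          by (rule frame[OF lm n1 n2 o12 refl g12])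
        show "\<exists>f1 f2 f3.
          diag_milnor g ((1/2) *\<^sub>R u1) ((1/2) *\<^sub>R u2) ((1/2) *\<^sub>R u3) f1 f2 f3 \<and> f2 = f3"
          using dd[unfolded gg[symmetric], unfolded e3] unfolding E_phi e1_def e2_def by blast
      qed
      then show ?thesis using nF False by auto
    qed
  qed
  show ?thesis using part1 part2 by blast
qed


end
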